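(* Let $G$ be a small category and $X$ a set with a partial category action by $G$, and let $Y = \overline{X}/\simeq$ as defined below. For $g\in{\rm mor}(G)$ and $(h,x)\in\overline{X}$, declare $g\cdot[h,x]$ defined if and only if there is $(h',x')\in\overline{X}$ with $(h,x)\simeq(h',x')$ and $(g,h')\in G^2$, and in that case put $g\cdot[h,x] = [gh',x']$. Then this is a well-defined global category action by $G$ on $Y$.
   Context: Conventions: $G$ is a small category; objects are identified with their identity morphisms, so ${\rm ob}(G)\subseteq{\rm mor}(G)$; $d(g), c(g)$ are domain and codomain, $G^2=\{(g,h)\mid d(g)=c(h)\}$. A partial category action by $G$ on $X$ is a partial function ${\rm mor}(G)\times X\to X$, $(g,x)\mapsto g\cdot x$ where defined, such that: (C1) for every $x$ there is $e\in{\rm ob}(G)$ with $e\cdot x$ defined, and whenever $f\in{\rm ob}(G)$ and $f\cdot x$ is defined, $f\cdot x=x$; (C2) if $g\cdot x$ is defined then $d(g)\cdot x$ is defined; (C3) if $(g,h)\in G^2$ and $h\cdot x$ is defined, then $(gh)\cdot x$ is defined iff $g\cdot(h\cdot x)$ is defined, and then they are equal. It is global if (C4): whenever $d(g)\cdot x$ is defined, $g\cdot x$ is defined. Let $\overline{X} = \{(g,x)\in{\rm mor}(G)\times X\mid d(g)\cdot x\text{ defined}\}$. Define $(g,x)\sim(g',x')$ on $\overline{X}$ if either (i) there is $h\in{\rm mor}(G)$ with $(g',h)\in G^2$, $h\cdot x$ defined, $g=g'h$ and $x'=h\cdot x$; or (ii) $x=x'$, $g,g'\in{\rm ob}(G)$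 and both $g\cdot x$ and $g'\cdot x'$ are defined. Let $\simeq$ be the equivalence relation generated by $\sim$, $Y=\overline{X}/\simeq$, and $[g,x]$ the class of $(g,x)$. *)

theory Defs
  imports Main
begin

text \<open>A small category is given by a set of morphisms Mor, a set of objects
Ob (identified with identity morphisms, Ob \<subseteq> Mor), domain/codomain maps
and a composition cmp g h (= g h, defined when dom g = cod h).\<close>

definition category ::
  "'m set \<Rightarrow> 'm set \<Rightarrow> ('m \<Rightarrow> 'm) \<Rightarrow> ('m \<Rightarrow> 'm) \<Rightarrow> ('m \<Rightarrow> 'm \<Rightarrow> 'm) \<Rightarrow> bool" where
  "category Mor Ob d c cmp \<longleftrightarrow>
     Ob \<subseteq> Mor \<and>
     (\<forall>g\<in>Mor. d g \<in> Ob \<and> c g \<in> Ob) \<and>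
     (\<forall>e\<in>Ob. d e = e \<and> c e = e) \<and>
     (\<forall>g\<in>Mor. \<forall>h\<in>Mor. d g = c h \<longrightarrow>
        cmp g h \<in> Mor \<and> d (cmp g h) = d h \<and> c (cmp g h) = c g) \<and>
     (\<forall>g\<in>Mor. cmp (c g) g = g \<and> cmp g (d g) = g) \<and>
     (\<forall>f\<in>Mor. \<forall>g\<in>Mor. \<forall>h\<in>Mor. d f = c g \<longrightarrow> d g = c h \<longrightarrow>
        cmp (cmp f g) h = cmp f (cmp g h))"

text \<open>A partial category action: act g x = Some y means g\<cdot>x is defined and equals y.
Only values with g \<in> Mor, x \<in> X are relevant.\<close>

definition partial_cat_action ::
  "'m set \<Rightarrow> 'm set \<Rightarrow> ('m \<Rightarrow> 'm) \<Rightarrow> ('m \<Rightarrow> 'm) \<Rightarrow> ('m \<Rightarrow> 'm \<Rightarrow> 'm)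
   \<Rightarrow> 'x set \<Rightarrow> ('m \<Rightarrow> 'x \<Rightarrow> 'x option) \<Rightarrow> bool" where
  "partial_cat_action Mor Ob d c cmp X act \<longleftrightarrow>
     (\<forall>g\<in>Mor. \<forall>x\<in>X. \<forall>y. act g x = Some y \<longrightarrow> y \<in> X) \<and>
     (\<forall>x\<in>X. \<exists>e\<in>Ob. act e x \<noteq> None) \<and>
     (\<forall>x\<in>X. \<forall>f\<in>Ob. act f x \<noteq> None \<longrightarrow> act f x = Some x) \<and>
     (\<forall>g\<in>Mor. \<forall>x\<in>X. act g x \<noteq> None \<longrightarrow> act (d g) x \<noteq> None) \<and>
     (\<forall>g\<in>Mor. \<forall>h\<in>Mor. \<forall>x\<in>X. \<forall>y. d g = c h \<longrightarrow> act h x = Some y \<longrightarrow>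
        ((act (cmp g h) x \<noteq> None \<longleftrightarrow> act g y \<noteq> None) \<and>
         (act (cmp g h) x \<noteq> None \<longrightarrow> act (cmp g h) x = act g y)))"

definition global_cat_action ::
  "'m set \<Rightarrow> 'm set \<Rightarrow> ('m \<Rightarrow> 'm) \<Rightarrow> ('m \<Rightarrow> 'm) \<Rightarrow> ('m \<Rightarrow> 'm \<Rightarrow> 'm)
   \<Rightarrow> 'x set \<Rightarrow> ('m \<Rightarrow> 'x \<Rightarrow> 'x option) \<Rightarrow> bool" where
  "global_cat_action Mor Ob d c cmp X act \<longleftrightarrow>
     partial_cat_action Mor Ob d c cmp X act \<and>
     (\<forall>g\<in>Mor. \<forall>x\<in>X. act (d g) x \<noteq> None \<longrightarrow> act g x \<noteq> None)"

definition Xbar ::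
  "'m set \<Rightarrow> ('m \<Rightarrow> 'm) \<Rightarrow> 'x set \<Rightarrow> ('m \<Rightarrow> 'x \<Rightarrow> 'x option) \<Rightarrow> ('m \<times> 'x) set" where
  "Xbar Mor d X act = {(g, x). g \<in> Mor \<and> x \<in> X \<and> act (d g) x \<noteq> None}"

definition sim_rel ::
  "'m set \<Rightarrow> 'm set \<Rightarrow> ('m \<Rightarrow> 'm) \<Rightarrow> ('m \<Rightarrow> 'm) \<Rightarrow> ('m \<Rightarrow> 'm \<Rightarrow> 'm)
   \<Rightarrow> 'x set \<Rightarrow> ('m \<Rightarrow> 'x \<Rightarrow> 'x option) \<Rightarrow> (('m \<times> 'x) \<times> ('m \<times> 'x)) set" where
  "sim_rel Mor Ob d c cmp X act =
     {((g, x), (g', x')). (g, x) \<in> Xbar Mor d X act \<and> (g', x') \<in> Xbar Mor d X act \<and>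
        ((\<exists>h\<in>Mor. d g' = c h \<and> act h x \<noteq> None \<and> g = cmp g' h \<and> act h x = Some x') \<or>
         (x = x' \<and> g \<in> Ob \<and> g' \<in> Ob \<and> act g x \<noteq> None \<and> act g' x' \<noteq> None))}"

definition simeq_rel ::
  "'m set \<Rightarrow> 'm set \<Rightarrow> ('m \<Rightarrow> 'm) \<Rightarrow> ('m \<Rightarrow> 'm) \<Rightarrow> ('m \<Rightarrow> 'm \<Rightarrow> 'm)
   \<Rightarrow> 'x set \<Rightarrow> ('m \<Rightarrow> 'x \<Rightarrow> 'x option) \<Rightarrow> (('m \<times> 'x) \<times> ('m \<times> 'x)) set" where
  "simeq_rel Mor Ob d c cmp X act =
     (Id_on (Xbar Mor d X act) \<union> sim_rel Mor Ob d c cmp X act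
        \<union> (sim_rel Mor Ob d c cmp X act)\<inverse>)\<^sup>*"

definition Yquot ::
  "'m set \<Rightarrow> 'm set \<Rightarrow> ('m \<Rightarrow> 'm) \<Rightarrow> ('m \<Rightarrow> 'm) \<Rightarrow> ('m \<Rightarrow> 'm \<Rightarrow> 'm)
   \<Rightarrow> 'x set \<Rightarrow> ('m \<Rightarrow> 'x \<Rightarrow> 'x option) \<Rightarrow> ('m \<times> 'x) set set" where
  "Yquot Mor Ob d c cmp X act = Xbar Mor d X act // simeq_rel Mor Ob d c cmp X act"

definition Yact ::
  "'m set \<Rightarrow> 'm set \<Rightarrow> ('m \<Rightarrow> 'm) \<Rightarrow> ('m \<Rightarrow> 'm) \<Rightarrow> ('m \<Rightarrow> 'm \<Rightarrow> 'm)
   \<Rightarrow> 'x set \<Rightarrow> ('m \<Rightarrow> 'x \<Rightarrow> 'x option) \<Rightarrow> 'm \<Rightarrow> ('m \<times> 'x) set \<Rightarrow> ('m \<times> 'x) set option" where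
  "Yact Mor Ob d c cmp X act g y =
     (if g \<in> Mor \<and> y \<in> Yquot Mor Ob d c cmp X act \<and> (\<exists>p\<in>y. d g = c (fst p))
      then (let p = (SOME p. p \<in> y \<and> d g = c (fst p))
            in Some (simeq_rel Mor Ob d c cmp X act `` {(cmp g (fst p), snd p)}))
      else None)"

end

theory Submission
  imports Defs
begin

locale pcA =
  fixes Mor Ob :: "'m set" and d c :: "'m \<Rightarrow> 'm" and cmp :: "'m \<Rightarrow> 'm \<Rightarrow> 'm"
    and X :: "'x set" and act :: "'m \<Rightarrow> 'x \<Rightarrow> 'x option"
  assumes cat: "category Mor Ob d c cmp"
    and pa: "partial_cat_action Mor Ob d c cmp X act"
begin

abbreviation "XB \<equiv> Xbar Mor d X act"
abbreviation "S \<equiv> sim_rel Mor Ob d c cmp X act"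
abbreviation "E \<equiv> simeq_rel Mor Ob d c cmp X act"
abbreviation "Y \<equiv> Yquot Mor Ob d c cmp X act"

lemma ObMor: "e \<in> Ob \<Longrightarrow> e \<in> Mor" using cat unfolding category_def by blast
lemma dOb: "g \<in> Mor \<Longrightarrow> d g \<in> Ob" using cat unfolding category_def by blast
lemma cOb: "g \<in> Mor \<Longrightarrow> c g \<in> Ob" using cat unfolding category_def by blast
lemma dob: "e \<in> Ob \<Longrightarrow> d e = e" using cat unfolding category_def by blast
lemma cob: "e \<in> Ob \<Longrightarrow> c e = e" using cat unfolding category_def by blast
lemma cmpM: "g \<in> Mor \<Longrightarrow> h \<in> Mor \<Longrightarrow> d g = c h \<Longrightarrow> cmp g h \<in> Mor"
  using cat unfolding category_def by blast
lemma cmpd: "g \<in> Mor \<Longrightarrow> h \<in> Mor \<Longrightarrow> d g = c h \<Longrightarrow> d (cmp g h) = d h"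
  using cat unfolding category_def by blast
lemma cmpc: "g \<in> Mor \<Longrightarrow> h \<in> Mor \<Longrightarrow> d g = c h \<Longrightarrow> c (cmp g h) = c g"
  using cat unfolding category_def by blast
lemma idl: "g \<in> Mor \<Longrightarrow> cmp (c g) g = g" using cat unfolding category_def by blast
lemma assoc: "f \<in> Mor \<Longrightarrow> g \<in> Mor \<Longrightarrow> h \<in> Mor \<Longrightarrow> d f = c g \<Longrightarrow> d g = c h \<Longrightarrow>
        cmp (cmp f g) h = cmp f (cmp g h)"
  using cat unfolding category_def by blast

lemma paclosed: "g \<in> Mor \<Longrightarrow> x \<in> X \<Longrightarrow> act g x = Some y \<Longrightarrow> y \<in> X"
  using pa unfolding partial_cat_action_def by blast
lemma paob: "x \<in> X \<Longrightarrow> \<exists>e\<in>Ob. act e x \<noteq> None"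
  using pa unfolding partial_cat_action_def by blast
lemma paid: "x \<in> X \<Longrightarrow> f \<in> Ob \<Longrightarrow> act f x \<noteq> None \<Longrightarrow> act f x = Some x"
  using pa unfolding partial_cat_action_def by blast
lemma pacomp: "g \<in> Mor \<Longrightarrow> h \<in> Mor \<Longrightarrow> x \<in> X \<Longrightarrow> d g = c h \<Longrightarrow> act h x = Some y \<Longrightarrow>
        (act (cmp g h) x \<noteq> None \<longleftrightarrow> act g y \<noteq> None) \<and>
        (act (cmp g h) x \<noteq> None \<longrightarrow> act (cmp g h) x = act g y)"
  using pa unfolding partial_cat_action_def by blast

lemma XB_iff: "(g, x) \<in> XB \<longleftrightarrow> g \<in> Mor \<and> x \<in> X \<and> act (d g) x \<noteq> None"
  unfolding Xbar_def by auto

lemma S_XB: "(p, q) \<in> S \<Longrightarrow> p \<in> XB \<and> q \<in> XB"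
  unfolding sim_rel_def by auto

lemma E_def': "E = (Id_on XB \<union> S \<union> S\<inverse>)\<^sup>*"
  unfolding simeq_rel_def by simp

lemma E_XB: "(p, q) \<in> E \<Longrightarrow> p \<in> XB \<Longrightarrow> q \<in> XB"
  unfolding E_def'
  by (induction rule: rtrancl_induct) (auto dest: S_XB)

lemma E_sym: "(p, q) \<in> E \<Longrightarrow> (q, p) \<in> E"
proof -
  have "sym (Id_on XB \<union> S \<union> S\<inverse>)" by (auto simp: sym_def)
  hence "sym E" unfolding E_def' by (rule sym_rtrancl)
  thus "(p, q) \<in> E \<Longrightarrow> (q, p) \<in> E" by (rule symD)
qed

lemma E_trans: "(p, q) \<in> E \<Longrightarrow> (q, r) \<in> E \<Longrightarrow> (p, r) \<in> E"
  unfolding E_def' by (rule rtrancl_trans)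

lemma E_refl: "(p, p) \<in> E" unfolding E_def' by simp

lemma S_E: "(p, q) \<in> S \<Longrightarrow> (p, q) \<in> E"
  unfolding E_def' by auto

lemma S_val: "((g, x), (g', x')) \<in> S \<Longrightarrow> act g x = act g' x'"
proof -
  assume a: "((g, x), (g', x')) \<in> S"
  hence xb: "(g, x) \<in> XB" "(g', x') \<in> XB" using S_XB by blast+
  from a have "(\<exists>h\<in>Mor. d g' = c h \<and> act h x \<noteq> None \<and> g = cmp g' h \<and> act h x = Some x') \<or>
         (x = x' \<and> g \<in> Ob \<and> g' \<in> Ob \<and> act g x \<noteq> None \<and> act g' x' \<noteq> None)"
    unfolding sim_rel_def by auto
  thus ?thesis
  proof
    assume "\<exists>h\<in>Mor. d g' = c h \<and> act h x \<noteq> None \<and> g = cmp g' h \<and> act h x = Some x'"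
    then obtain h where h: "h \<in> Mor" "d g' = c h" "g = cmp g' h" "act h x = Some x'" by blast
    have "g' \<in> Mor" "x \<in> X" using xb XB_iff by auto
    from pacomp[OF this(1) h(1) this(2) h(2) h(4)] h(3) show ?thesis by fastforce
  next
    assume "x = x' \<and> g \<in> Ob \<and> g' \<in> Ob \<and> act g x \<noteq> None \<and> act g' x' \<noteq> None"
    moreover have "x \<in> X" using xb XB_iff by auto
    ultimately show ?thesis using paid by metis
  qed
qed

lemma E_val: "(p, q) \<in> E \<Longrightarrow> act (fst p) (snd p) = act (fst q) (snd q)"
  unfolding E_def'
proof (induction rule: rtrancl_induct)
  case base then show ?case by simp
next
  case (step q r)
  from step(2) have "act (fst q) (snd q) = act (fst r) (snd r)"
    using S_val by (cases q; cases r) force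
  with step(3) show ?case by simp
qed

lemma S_new_cod: "((g, x), (g', x')) \<in> S \<Longrightarrow> act g x = None \<Longrightarrow> c g = c g'"
proof -
  assume a: "((g, x), (g', x')) \<in> S" and n: "act g x = None"
  hence xb: "(g, x) \<in> XB" "(g', x') \<in> XB" using S_XB by blast+
  from a n obtain h where h: "h \<in> Mor" "d g' = c h" "g = cmp g' h" "act h x = Some x'"
    unfolding sim_rel_def by auto
  have "g' \<in> Mor" using xb XB_iff by auto
  thus ?thesis using h cmpc by auto
qed

lemma S_lift: "((g, x), (g', x')) \<in> S \<Longrightarrow> act g x = None \<Longrightarrow> G \<in> Mor \<Longrightarrow> d G = c g \<Longrightarrow>
   ((cmp G g, x), (cmp G g', x')) \<in> S"
proof -
  assume a: "((g, x), (g', x')) \<in> S" and n: "act g x = None" and G: "G \<in> Mor" "d G = c g"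
  hence xb: "(g, x) \<in> XB" "(g', x') \<in> XB" using S_XB by blast+
  from a n obtain h where h: "h \<in> Mor" "d g' = c h" "g = cmp g' h" "act h x = Some x'"
    unfolding sim_rel_def by auto
  have g': "g' \<in> Mor" "g \<in> Mor" "x \<in> X" "x' \<in> X" "act (d g) x \<noteq> None" "act (d g') x' \<noteq> None"
    using xb XB_iff by auto
  have cc: "c g = c g'" using g' h cmpc by auto
  have m1: "cmp G g \<in> Mor" "d (cmp G g) = d g" using G g' cmpM cmpd by auto
  have m2: "cmp G g' \<in> Mor" "d (cmp G g') = d g'" using G g' cc cmpM cmpd by auto
  have as: "cmp G g = cmp (cmp G g') h" using assoc[OF G(1) g'(1) h(1)] G cc h by simp
  show ?thesis unfolding sim_rel_def
    using m1 m2 as g' h by (auto simp: XB_iff)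
qed

lemma step_lift:
  assumes qr: "(q, r) \<in> Id_on XB \<union> S \<union> S\<inverse>" and q: "q \<in> XB"
    and n: "act (fst q) (snd q) = None" and G: "G \<in> Mor" "d G = c (fst q)"
  shows "c (fst r) = c (fst q) \<and> ((cmp G (fst q), snd q), (cmp G (fst r), snd r)) \<in> E"
proof -
  obtain g x where qq: "q = (g, x)" by (cases q)
  obtain g' x' where rr: "r = (g', x')" by (cases r)
  from qr consider "q = r" | "(q, r) \<in> S" | "(r, q) \<in> S" by auto
  thus ?thesis
  proof cases
    case 1 thus ?thesis using E_refl by simp
  next
    case 2
    hence s: "((g, x), (g', x')) \<in> S" using qq rr by simp
    have n': "act g x = None" using n qq by simp
    have cc: "c g = c g'" using S_new_cod[OF s n'] .
    have "((cmp G g, x), (cmp G g', x')) \<in> S" using S_lift[OF s n'] G qq by simp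
    thus ?thesis using qq rr cc S_E by auto
  next
    case 3
    hence s: "((g', x'), (g, x)) \<in> S" using qq rr by simp
    hence n': "act g' x' = None" using S_val n qq by simp
    have cc: "c g' = c g" using S_new_cod[OF s n'] .
    have "((cmp G g', x'), (cmp G g, x)) \<in> S" using S_lift[OF s n'] G qq cc by simp
    thus ?thesis using qq rr cc S_E E_sym by auto
  qed
qed

lemma new_case:
  assumes "(p, q) \<in> E" "p \<in> XB" "act (fst p) (snd p) = None" "G \<in> Mor" "d G = c (fst p)"
  shows "c (fst q) = c (fst p) \<and> ((cmp G (fst p), snd p), (cmp G (fst q), snd q)) \<in> E"
  using assms(1) unfolding E_def'
proof (induction rule: rtrancl_induct)
  case base then show ?case using E_refl by simp
next
  case (step q r)
  have qE: "(p, q) \<in> E" using step(1) unfolding E_def' .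
  have q: "q \<in> XB" using E_XB[OF qE assms(2)] .
  have nq: "act (fst q) (snd q) = None" using E_val[OF qE] assms(3) by simp
  from step(3) have IH1: "c (fst q) = c (fst p)"
    and IH2: "((cmp G (fst p), snd p), (cmp G (fst q), snd q)) \<in> E"
    unfolding E_def' by auto
  have nw: "c (fst r) = c (fst q) \<and> ((cmp G (fst q), snd q), (cmp G (fst r), snd r)) \<in> E"
    using step_lift[OF step(2) q nq assms(4)] IH1 assms(5) by simp
  have "((cmp G (fst p), snd p), (cmp G (fst r), snd r)) \<in> E"
    using E_trans[OF IH2] nw by blast
  thus ?case using IH1 nw unfolding E_def' by simp
qed

lemma old_S:
  assumes "(h, x) \<in> XB" "act h x = Some w" "G \<in> Mor" "d G = c h"
  shows "((cmp G h, x), (G, w)) \<in> S"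
proof -
  have hx: "h \<in> Mor" "x \<in> X" using assms(1) XB_iff by auto
  have w: "w \<in> X" using paclosed hx assms(2) by blast
  have ch: "c h \<in> Mor" "d (c h) = c h" using cOb ObMor dob hx by auto
  from pacomp[OF ch(1) hx(1) hx(2) ch(2) assms(2)] idl[OF hx(1)] assms(2)
  have "act (c h) w \<noteq> None" by auto
  hence Gw: "(G, w) \<in> XB" using assms w XB_iff by auto
  have "(cmp G h, x) \<in> XB" using assms hx cmpM cmpd XB_iff by auto
  thus ?thesis using Gw unfolding sim_rel_def using hx assms by auto
qed

lemma welldef:
  assumes "(p, q) \<in> E" "p \<in> XB" "G \<in> Mor" "d G = c (fst p)" "d G = c (fst q)"
  shows "((cmp G (fst p), snd p), (cmp G (fst q), snd q)) \<in> E"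
proof (cases "act (fst p) (snd p)")
  case None thus ?thesis using new_case assms by blast
next
  case (Some w)
  have q: "q \<in> XB" using E_XB assms by blast
  have wq: "act (fst q) (snd q) = Some w" using E_val[OF assms(1)] Some by simp
  have 1: "((cmp G (fst p), snd p), (G, w)) \<in> S"
    using old_S[of "fst p" "snd p"] assms Some by auto
  have 2: "((cmp G (fst q), snd q), (G, w)) \<in> S"
    using old_S[of "fst q" "snd q"] assms q wq by auto
  show ?thesis using S_E[OF 1] E_sym[OF S_E[OF 2]] E_trans by blast
qed

lemma class_facts:
  assumes "y \<in> Y" "p \<in> y" "q \<in> y"
  shows "(p, q) \<in> E \<and> p \<in> XB \<and> y = E `` {p}"
proof -
  from assms(1) obtain a where a: "a \<in> XB" "y = E `` {a}"
    unfolding Yquot_def quotient_def by auto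
  have ap: "(a, p) \<in> E" "(a, q) \<in> E" using a assms by auto
  have "(p, q) \<in> E" using E_sym[OF ap(1)] ap(2) E_trans by blast
  moreover have "p \<in> XB" using E_XB ap a by blast
  moreover have "y = E `` {p}" using a ap E_sym E_trans by blast
  ultimately show ?thesis by blast
qed

lemma class_eq: "(P, Q) \<in> E \<Longrightarrow> E `` {P} = E `` {Q}"
  using E_sym E_trans by blast

lemma Yact_Some:
  assumes "G \<in> Mor" "y \<in> Y" "p \<in> y" "d G = c (fst p)"
  shows "Yact Mor Ob d c cmp X act G y = Some (E `` {(cmp G (fst p), snd p)})"
proof -
  define p0 where "p0 = (SOME p. p \<in> y \<and> d G = c (fst p))"
  have p0: "p0 \<in> y \<and> d G = c (fst p0)" unfolding p0_def
    by (rule someI[of _ p]) (use assms in auto)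
  have cf: "(p0, p) \<in> E \<and> p0 \<in> XB" using class_facts assms p0 by blast
  have eq: "E `` {(cmp G (fst p0), snd p0)} = E `` {(cmp G (fst p), snd p)}"
    using class_eq[OF welldef[of p0 p G]] cf assms p0 by blast
  have cond: "G \<in> Mor \<and> y \<in> Y \<and> (\<exists>p\<in>y. d G = c (fst p))" using assms by blast
  have "Yact Mor Ob d c cmp X act G y = Some (E `` {(cmp G (fst p0), snd p0)})"
    unfolding Yact_def Let_def p0_def using cond by (simp only: simp_thms if_True)
  thus ?thesis using eq by simp
qed

lemma Yact_None_iff:
  "Yact Mor Ob d c cmp X act G y \<noteq> None \<longleftrightarrow> (G \<in> Mor \<and> y \<in> Y \<and> (\<exists>p\<in>y. d G = c (fst p)))"
  unfolding Yact_def by (auto simp: Let_def)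

lemma Y_ne: "y \<in> Y \<Longrightarrow> \<exists>p. p \<in> y"
  unfolding Yquot_def quotient_def using E_refl by blast

lemma part1:
  "\<forall>g\<in>Mor. \<forall>y\<in>Y. \<forall>p\<in>y. \<forall>q\<in>y.
            d g = c (fst p) \<longrightarrow> d g = c (fst q) \<longrightarrow>
            (cmp g (fst p), snd p) \<in> XB \<and>
            E `` {(cmp g (fst p), snd p)} = E `` {(cmp g (fst q), snd q)}"
proof (intro ballI impI conjI)
  fix g y p q assume g: "g \<in> Mor" and y: "y \<in> Y" and p: "p \<in> y" and q: "q \<in> y"
    and dp: "d g = c (fst p)" and dq: "d g = c (fst q)"
  have cf: "(p, q) \<in> E \<and> p \<in> XB" using class_facts y p q by blast
  thus "E `` {(cmp g (fst p), snd p)} = E `` {(cmp g (fst q), snd q)}"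
    using class_eq[OF welldef[OF _ _ g dp dq]] by blast
  obtain h x where hx: "p = (h, x)" by (cases p)
  have "h \<in> Mor" "x \<in> X" "act (d h) x \<noteq> None" using cf hx XB_iff by auto
  moreover have "cmp g h \<in> Mor" "d (cmp g h) = d h" using cmpM[OF g] cmpd[OF g] calculation dp hx by auto
  ultimately show "(cmp g (fst p), snd p) \<in> XB" using hx XB_iff by simp
qed

lemma C3Y:
  assumes g: "g \<in> Mor" and h: "h \<in> Mor" and y: "y \<in> Y" and dg: "d g = c h"
    and z: "Yact Mor Ob d c cmp X act h y = Some z"
  shows "\<exists>w. Yact Mor Ob d c cmp X act (cmp g h) y = Some w \<and> Yact Mor Ob d c cmp X act g z = Some w"
proof -
  from z obtain p where p: "p \<in> y" "d h = c (fst p)" using Yact_None_iff[of h y] by auto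
  have pX: "p \<in> XB" using class_facts y p by blast
  hence fm: "fst p \<in> Mor" by (cases p) (auto simp: XB_iff)
  have zz: "z = E `` {(cmp h (fst p), snd p)}" using Yact_Some h y p z by simp
  have hpX: "(cmp h (fst p), snd p) \<in> XB" using part1 h y p by blast
  have zY: "z \<in> Y" using zz hpX unfolding Yquot_def by (auto intro: quotientI)
  have inz: "(cmp h (fst p), snd p) \<in> z" using zz E_refl by simp
  have ch: "c (cmp h (fst p)) = c h" using cmpc h fm p by simp
  have gh: "cmp g h \<in> Mor" "d (cmp g h) = d h" using cmpM cmpd g h dg by auto
  have L: "Yact Mor Ob d c cmp X act (cmp g h) y = Some (E `` {(cmp (cmp g h) (fst p), snd p)})"
    using Yact_Some[OF gh(1) y p(1)] gh p by simp
  have R: "Yact Mor Ob d c cmp X act g z = Some (E `` {(cmp g (cmp h (fst p)), snd p)})"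
    using Yact_Some[OF g zY inz] ch dg by simp
  have "cmp (cmp g h) (fst p) = cmp g (cmp h (fst p))" using assoc g h fm dg p by simp
  thus ?thesis using L R by auto
qed

lemma part2: "global_cat_action Mor Ob d c cmp Y (Yact Mor Ob d c cmp X act)"
  unfolding global_cat_action_def partial_cat_action_def
proof (intro conjI ballI allI impI)
  fix g y z assume g: "g \<in> Mor" and y: "y \<in> Y" and z: "Yact Mor Ob d c cmp X act g y = Some z"
  then obtain p where p: "p \<in> y" "d g = c (fst p)" using Yact_None_iff[of g y] by auto
  have "z = E `` {(cmp g (fst p), snd p)}" using Yact_Some g y p z by simp
  moreover have "(cmp g (fst p), snd p) \<in> XB" using part1 g y p by blast
  ultimately show "z \<in> Y" unfolding Yquot_def by (auto intro: quotientI)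
next
  fix y assume y: "y \<in> Y"
  then obtain p where p: "p \<in> y" using Y_ne by blast
  have pX: "p \<in> XB" using class_facts y p by blast
  hence "fst p \<in> Mor" by (cases p) (auto simp: XB_iff)
  hence "c (fst p) \<in> Ob" "d (c (fst p)) = c (fst p)" using cOb dob by auto
  thus "\<exists>e\<in>Ob. Yact Mor Ob d c cmp X act e y \<noteq> None"
    using Yact_None_iff[of "c (fst p)" y] y p ObMor by auto
next
  fix y f assume y: "y \<in> Y" and f: "f \<in> Ob" and n: "Yact Mor Ob d c cmp X act f y \<noteq> None"
  then obtain p where p: "p \<in> y" "d f = c (fst p)" using Yact_None_iff[of f y] by blast
  have pX: "p \<in> XB" and yp: "y = E `` {p}" using class_facts y p by blast+
  hence fm: "fst p \<in> Mor" by (cases p) (auto simp: XB_iff)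
  have "f = c (fst p)" using p dob f by simp
  hence "cmp f (fst p) = fst p" using idl fm by simp
  thus "Yact Mor Ob d c cmp X act f y = Some y"
    using Yact_Some[OF ObMor[OF f] y p] yp by simp
next
  fix g y assume g: "g \<in> Mor" and y: "y \<in> Y" and n: "Yact Mor Ob d c cmp X act g y \<noteq> None"
  then obtain p where p: "p \<in> y" "d g = c (fst p)" using Yact_None_iff[of g y] by blast
  have "d g \<in> Mor" "d (d g) = d g" using dOb ObMor dob g by auto
  thus "Yact Mor Ob d c cmp X act (d g) y \<noteq> None" using Yact_None_iff[of "d g" y] y p by auto
next
  fix g y assume g: "g \<in> Mor" and y: "y \<in> Y" and n: "Yact Mor Ob d c cmp X act (d g) y \<noteq> None"
  then obtain p where p: "p \<in> y" "d (d g) = c (fst p)" using Yact_None_iff[of "d g" y] by blast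
  have "d (d g) = d g" using dOb dob g by auto
  hence "d g = c (fst p)" using p by simp
  thus "Yact Mor Ob d c cmp X act g y \<noteq> None" using Yact_None_iff[of g y] y p(1) g by blast
next
  fix g h y z assume g: "g \<in> Mor" and h: "h \<in> Mor" and y: "y \<in> Y" and dg: "d g = c h"
    and z: "Yact Mor Ob d c cmp X act h y = Some z"
  show "(Yact Mor Ob d c cmp X act (cmp g h) y \<noteq> None) = (Yact Mor Ob d c cmp X act g z \<noteq> None)"
    using C3Y[OF g h y dg z] by (elim exE conjE) simp
next
  fix g h y z assume g: "g \<in> Mor" and h: "h \<in> Mor" and y: "y \<in> Y" and dg: "d g = c h"
    and z: "Yact Mor Ob d c cmp X act h y = Some z"
  show "Yact Mor Ob d c cmp X act (cmp g h) y = Yact Mor Ob d c cmp X act g z"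
    using C3Y[OF g h y dg z] by (elim exE conjE) simp
qed

end

theorem proposition3p11:
  fixes Mor Ob :: "'m set" and d c :: "'m \<Rightarrow> 'm" and cmp :: "'m \<Rightarrow> 'm \<Rightarrow> 'm"
    and X :: "'x set" and act :: "'m \<Rightarrow> 'x \<Rightarrow> 'x option"
  assumes "category Mor Ob d c cmp"
    and "partial_cat_action Mor Ob d c cmp X act"
  shows "(\<forall>g\<in>Mor. \<forall>y\<in>Yquot Mor Ob d c cmp X act. \<forall>p\<in>y. \<forall>q\<in>y.
            d g = c (fst p) \<longrightarrow> d g = c (fst q) \<longrightarrow>
            (cmp g (fst p), snd p) \<in> Xbar Mor d X act \<and>
            simeq_rel Mor Ob d c cmp X act `` {(cmp g (fst p), snd p)}
              = simeq_rel Mor Ob d c cmp X act `` {(cmp g (fst q), snd q)})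
         \<and> global_cat_action Mor Ob d c cmp (Yquot Mor Ob d c cmp X act)
              (Yact Mor Ob d c cmp X act)"
proof -
  interpret pcA Mor Ob d c cmp X act using assms by unfold_locales
  show ?thesis using part1 part2 by blast
qed

end
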